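(* Let $n$ be a nonzero integer and let $\{a,b,c,d\}$ be a set of positive integers with the property $D(n)$ such that $|n|^3\le a<b<c<d$. Then \[ d>\frac{3.847\,bc}{n^2}. \]
   Context: A set of positive integers $S$ has the property $D(n)$ if $xy+n$ is a perfect square for all distinct $x,y\in S$. *)

theory Defs
  imports Complex_Main
begin

definition is_square :: "int \<Rightarrow> bool" where
  "is_square m \<longleftrightarrow> (\<exists>k::int. m = k^2)"

definition has_D :: "int \<Rightarrow> int set \<Rightarrow> bool" where
  "has_D n S \<longleftrightarrow> (\<forall>x\<in>S. x > 0) \<and> (\<forall>x\<in>S. \<forall>y\<in>S. x \<noteq> y \<longrightarrow> is_square (x*y + n))"

end

theory Submission
  imports Defs
begin

lemma sq_witness:
  assumes "is_square m" shows "\<exists>k::int. k \<ge> 0 \<and> m = k^2"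
proof -
  from assms obtain k where "m = k^2" by (auto simp: is_square_def)
  then show ?thesis by (intro exI[of _ "\<bar>k\<bar>"]) simp
qed

lemma no_square_between:
  fixes x q w :: int
  assumes x0: "x \<ge> 0" and hx: "x^2 = q^2 + w" and w0: "w \<noteq> 0" and wb: "\<bar>w\<bar> < 2*q - 1"
  shows False
proof -
  have q1: "q \<ge> 1" using w0 wb by linarith
  have "x < q + 1"
  proof (rule ccontr)
    assume "\<not> x < q + 1"
    then have "q + 1 \<le> x" by simp
    then have "(q+1)^2 \<le> x^2" using q1 by (intro power_mono) auto
    then show False using hx wb by (simp add: power2_eq_square algebra_simps)
  qed
  moreover have "x > q - 1"
  proof (rule ccontr)
    assume "\<not> x > q - 1"
    then have "x \<le> q - 1" by simp
    then have "x^2 \<le> (q-1)^2" using x0 by (intro power_mono) auto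
    then show False using hx wb by (simp add: power2_eq_square algebra_simps)
  qed
  ultimately have "x = q" by simp
  then show False using hx w0 by simp
qed

lemma n_facts:
  fixes n a :: int
  assumes "n \<noteq> 0" "\<bar>n\<bar>^3 \<le> a"
  shows "\<bar>n\<bar> \<ge> 1" "\<bar>n\<bar> \<le> a" "n^2 \<le> a" "a \<ge> 1"
proof -
  show n1: "\<bar>n\<bar> \<ge> 1" using assms(1) by linarith
  have "\<bar>n\<bar>^2 \<le> \<bar>n\<bar>^3" using n1 by (intro power_increasing) auto
  then show "n^2 \<le> a" using assms(2) by simp
  moreover have "\<bar>n\<bar>*1 \<le> \<bar>n\<bar>*\<bar>n\<bar>" using n1 by (intro mult_left_mono) auto
  then have "\<bar>n\<bar> \<le> \<bar>n\<bar>^2" by (simp add: power2_eq_square)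
  ultimately show "\<bar>n\<bar> \<le> a" by simp
  then show "a \<ge> 1" using n1 by simp
qed

lemma regular_case_false:
  fixes n a b c d r s t x :: int
  assumes n0: "n \<noteq> 0" and na: "\<bar>n\<bar>^3 \<le> a" and ab: "a < b" and bc: "b < c"
    and r: "a*b + n = r^2" and r0: "r \<ge> 0" and s: "a*c+n = s^2" and s0: "s \<ge> 0"
    and t: "b*c+n = t^2" and t0: "t \<ge> 0"
    and x: "a*d+n = x^2" and x0: "x \<ge> 0" and dd: "d = b + c + 2*t"
  shows False
proof -
  note nf = n_facts[OF n0 na]
  define \<delta> where "\<delta> = a*t - r*s"
  define P where "P = a*t + r*s"
  define K where "K = a*(b+c-a) + n"
  have h\<delta>: "\<delta>*P = -n*K"
  proof -
    have "\<delta>*P = a^2*t^2 - r^2*s^2" unfolding \<delta>_def P_def by (simp add: power2_eq_square algebra_simps)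
    also have "\<dots> = a^2*(b*c+n) - (a*b+n)*(a*c+n)" using r s t by simp
    also have "\<dots> = -n*K" unfolding K_def by (simp add: power2_eq_square algebra_simps)
    finally show ?thesis .
  qed
  have hx: "x^2 = (r+s)^2 + (2*\<delta> - n)"
  proof -
    have "x^2 = a*b + a*c + 2*a*t + n" using x dd by (simp add: algebra_simps)
    also have "\<dots> = (r^2 - n) + (s^2 - n) + 2*a*t + n" using r s by simp
    also have "\<dots> = (r+s)^2 + (2*\<delta> - n)" unfolding \<delta>_def by (simp add: power2_eq_square algebra_simps)
    finally show ?thesis .
  qed
  have a1: "a \<ge> 1" using nf by simp
  have "a*(b-a) \<ge> 0" using ab a1 by simp
  moreover have "a*c \<ge> c" using a1 bc ab by simp
  moreover have "K = a*c + a*(b-a) + n" unfolding K_def by (simp add: algebra_simps)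
  ultimately have Kpos: "K > 0" using nf ab bc by linarith
  have "b*c \<ge> c" using a1 ab bc by simp
  then have "t^2 > 0" using t nf ab bc by linarith
  then have tpos: "t > 0" using t0 by (cases "t = 0") auto
  have "a*t > 0" using a1 tpos by simp
  moreover have "r*s \<ge> 0" using r0 s0 by simp
  ultimately have Ppos: "P > 0" unfolding P_def by simp
  have rb: "2*r \<ge> \<bar>n\<bar> \<and> \<bar>n\<bar>*K < s*P"
  proof (cases "\<bar>n\<bar> \<ge> 2")
    case True
    have "\<bar>n\<bar>^2 \<ge> 2^2" using True by (intro power_mono) auto
    then have "\<bar>n\<bar>*\<bar>n\<bar>^2 \<ge> \<bar>n\<bar>*4" using nf by (intro mult_left_mono) auto
    then have "\<bar>n\<bar>^3 \<ge> 4*\<bar>n\<bar>" by (simp add: power3_eq_cube power2_eq_square)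
    then have a4: "a \<ge> 4*\<bar>n\<bar>" using na by simp
    have "a*b \<ge> a*(a+1)" using ab a1 by (intro mult_left_mono) auto
    then have "r^2 \<ge> a*(a+1) - \<bar>n\<bar>" using r by linarith
    moreover have "a*(a+1) = a^2 + a" by (simp add: power2_eq_square algebra_simps)
    ultimately have "r^2 \<ge> a^2" using nf by linarith
    moreover have "a^2 \<ge> (4*\<bar>n\<bar>)^2" using a4 by (intro power_mono) auto
    ultimately have "(4*\<bar>n\<bar>)^2 \<le> r^2" by (meson order_trans)
    then have r4: "4*\<bar>n\<bar> \<le> r" by (rule power2_le_imp_le[OF _ r0])
    have e1: "s*P = a*s*t + r*s^2" unfolding P_def by (simp add: power2_eq_square algebra_simps)
    have e2: "a*s*t \<ge> 0" using a1 s0 t0 by simp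
    have e3: "r*s^2 \<ge> (4*\<bar>n\<bar>)*s^2" using r4 by (intro mult_right_mono) auto
    have e4: "4*\<bar>n\<bar>*(a*c+n) \<le> r*s^2" using e3 by (simp only: s)
    have sP: "s*P \<ge> 4*\<bar>n\<bar>*(a*c+n)" using e1 e2 e4 by linarith
    have aa: "a^2 \<ge> a"
    proof -
      have "a*a \<ge> a*1" using a1 by (intro mult_left_mono) auto
      then show ?thesis unfolding power2_eq_square by linarith
    qed
    have "K = a*b + a*c - a^2 + n" unfolding K_def by (simp add: power2_eq_square algebra_simps)
    then have "K \<le> a*b + a*c" using aa nf by linarith
    then have f1: "\<bar>n\<bar>*K \<le> \<bar>n\<bar>*(a*b+a*c)" by (intro mult_left_mono) auto
    have f2: "a*b < a*c" using a1 bc by simp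
    have f3: "a*c \<ge> c" using a1 bc ab by simp
    have f4: "a*b + a*c < 4*(a*c+n)" using f2 f3 a4 ab bc abs_ge_minus_self[of n] by (smt (verit))
    have f5: "\<bar>n\<bar>*(a*b+a*c) < \<bar>n\<bar>*(4*(a*c+n))" using f4 nf by (intro mult_strict_left_mono) auto
    have "\<bar>n\<bar>*(4*(a*c+n)) = 4*\<bar>n\<bar>*(a*c+n)" by simp
    then have "\<bar>n\<bar>*K < s*P" using f1 f5 sP by linarith
    then show ?thesis using r4 nf by simp
  next
    case False
    then have n1: "\<bar>n\<bar> = 1" using nf by simp
    have "a*b \<ge> b" using a1 ab by simp
    then have "r^2 \<ge> 1" using r ab a1 n1 by linarith
    then have r1: "r \<ge> 1" using r0 by (cases "r = 0") auto
    have st: "(s*t)^2 = (a*c+n)*(b*c+n)" using s t by (simp add: power_mult_distrib)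
    have "a*c \<ge> c" using a1 bc ab by simp
    then have h1: "a*c+n \<ge> b" using bc n1 by linarith
    have "b*c \<ge> b*(b+1)" using bc ab a1 by (intro mult_left_mono) auto
    then have h2: "b*c+n \<ge> b*b+b-1" using n1 by (simp add: algebra_simps)
    have "b \<ge> 0" using ab a1 by simp
    moreover have "b*b+b-1 \<ge> 0"
    proof -
      have "b*b \<ge> 0" by simp
      then show ?thesis using ab a1 by linarith
    qed
    ultimately have "(a*c+n)*(b*c+n) \<ge> b*(b*b+b-1)" using h1 h2 by (intro mult_mono) auto
    moreover have "b*(b*b+b-1) > (b+1)^2"
    proof -
      have b2: "b \<ge> 2" using ab a1 by simp
      have bb: "b*b \<ge> 2*b" using b2 by (intro mult_right_mono) auto
      have "b*(b*b) \<ge> b*(2*b)" using bb b2 by (intro mult_left_mono) auto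
      moreover have "b*(2*b) \<ge> 4*b" using bb by simp
      moreover have "b*(b*b+b-1) = b*(b*b) + b*b - b" by (simp add: algebra_simps)
      moreover have "(b+1)^2 = b*b + 2*b + 1" by (simp add: power2_eq_square algebra_simps)
      ultimately show ?thesis using b2 by linarith
    qed
    ultimately have "(s*t)^2 > (b+1)^2" using st by simp
    then have stb: "s*t \<ge> b + 2" using s0 t0 power_less_imp_less_base[of "b+1" 2 "s*t"] by simp
    have "s*P = a*(s*t) + r*s^2" unfolding P_def by (simp add: power2_eq_square algebra_simps)
    moreover have "a*(s*t) \<ge> a*(b+2)" using stb a1 by (intro mult_left_mono) auto
    moreover have "r*s^2 \<ge> 1*s^2" using r1 by (intro mult_right_mono) auto
    ultimately have "s*P \<ge> a*b + 2*a + (a*c+n)" using s by (simp add: algebra_simps)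
    moreover have "a^2 \<ge> 1"
    proof -
      have "a*a \<ge> a*1" using a1 by (intro mult_left_mono) auto
      then show ?thesis using a1 unfolding power2_eq_square by linarith
    qed
    ultimately have "K < s*P" unfolding K_def using n1 a1 by (simp add: power2_eq_square algebra_simps)
    then show ?thesis using n1 r1 by simp
  qed
  have "\<bar>\<delta>\<bar>*P = \<bar>n\<bar>*K" using arg_cong[OF h\<delta>, of abs] Ppos Kpos by (simp add: abs_mult)
  then have "\<bar>\<delta>\<bar>*P < s*P" using rb by simp
  then have dls: "\<bar>\<delta>\<bar> < s" using Ppos by (simp add: mult_less_cancel_right)
  have ne: "2*\<delta> - n \<noteq> 0"
  proof
    assume "2*\<delta> - n = 0"
    then have "n*P = -n*(2*K)" using h\<delta> by (metis mult.commute mult.left_commute mult_minus_left eq_iff_diff_eq_0)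
    then have "n*P = n*(-(2*K))" by simp
    then have "P = -(2*K)" using n0 by (metis mult_cancel_left)
    then show False using Ppos Kpos by simp
  qed
  have "\<bar>2*\<delta> - n\<bar> < 2*(r+s) - 1" using dls conjunct1[OF rb] by arith
  then show False using no_square_between[OF x0 hx ne] by simp
qed

lemma small_d_false:
  fixes n b c d :: int
  assumes n0: "n \<noteq> 0" and nb: "\<bar>n\<bar> < b" and bc: "b < c" and cd: "c < d" and dbc: "d < b + c"
    and h: "n^2*((d-b-c)^2 - 4*(b*c+n)) \<ge> 2*(n*(b+c+d) + 2*b*c*d) - 1"
  shows False
proof -
  have n1: "\<bar>n\<bar> \<ge> 1" using n0 by linarith
  have "\<bar>d-b-c\<bar> \<le> \<bar>b\<bar>" using nb cd dbc by linarith
  then have q1: "(d-b-c)^2 \<le> b^2" by (simp add: abs_le_square_iff)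
  have q2: "b^2 \<le> b*c" using bc nb unfolding power2_eq_square by (intro mult_left_mono) auto
  have "b*2 \<le> b*c" using bc nb by (intro mult_left_mono) auto
  then have q3: "b*c \<ge> 2*b" by simp
  have Q: "(d-b-c)^2 - 4*(b*c+n) < 0" using q1 q2 q3 nb abs_ge_minus_self[of n] by (smt (verit))
  have "n^2 > 0" using n0 by simp
  then have L: "n^2*((d-b-c)^2 - 4*(b*c+n)) < 0" using Q by (simp add: mult_pos_neg)
  have r1: "\<bar>n\<bar>*(b+c+d) \<le> \<bar>n\<bar>*(3*d)" using bc cd by (intro mult_left_mono) auto
  have r2: "n*(b+c+d) \<ge> -(\<bar>n\<bar>*(b+c+d))"
  proof -
    have "\<bar>n*(b+c+d)\<bar> = \<bar>n\<bar>*(b+c+d)" using nb bc cd by (simp add: abs_mult)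
    then show ?thesis by (smt (verit) abs_ge_minus_self)
  qed
  have r3: "(b*c)*d \<ge> (2*\<bar>n\<bar>+2)*d" using q3 nb bc cd by (intro mult_right_mono) auto
  have r4: "(2*\<bar>n\<bar>+2)*d = 2*\<bar>n\<bar>*d + 2*d" by (simp add: algebra_simps)
  have r5: "\<bar>n\<bar>*(3*d) = 3*(\<bar>n\<bar>*d)" by simp
  have r6: "2*(n*(b+c+d) + 2*b*c*d) - 1 = 2*(n*(b+c+d)) + 4*(b*c*d) - 1" by simp
  have F1: "\<bar>n\<bar>*(b+c+d) \<le> 3*(\<bar>n\<bar>*d)" using r1 r5 by simp
  have F3: "2*(\<bar>n\<bar>*d) + 2*d \<le> b*c*d" using r3 r4 by simp
  have F4: "\<bar>n\<bar>*d \<ge> 0" using nb bc cd by simp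
  have lin: "\<And>N A X Y D::int. A \<le> 3*Y \<Longrightarrow> -A \<le> N \<Longrightarrow> 2*Y + 2*D \<le> X \<Longrightarrow> Y \<ge> 0 \<Longrightarrow> D \<ge> 2
     \<Longrightarrow> 0 < 2*N + 4*X - 1" by linarith
  have "2*(n*(b+c+d) + 2*b*c*d) - 1 > 0" unfolding r6 using lin[OF F1 r2 F3 F4] nb bc cd by linarith
  then show False using h L by linarith
qed

lemma big_d_bound:
  fixes n b c d :: int
  assumes n0: "n \<noteq> 0" and nb: "\<bar>n\<bar> < b" and b2: "b \<ge> 2" and bc: "b < c" and cd: "c < d" and dbc: "d \<ge> b + c"
    and h: "n^2*((d-b-c)^2 - 4*(b*c+n)) \<ge> 2*(n*(b+c+d) + 2*b*c*d) - 1"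
  shows "n^2*d^2 + 1 \<ge> 4*(b*c*d)"
proof -
  have n1: "\<bar>n\<bar> \<ge> 1" using n0 by linarith
  have "(d-b-c)^2 = d^2 - d*(b+c) - (b+c)*(d-b-c)" by (simp add: power2_eq_square algebra_simps)
  moreover have "(b+c)*(d-b-c) \<ge> 0" using dbc bc b2 by simp
  ultimately have q1: "(d-b-c)^2 \<le> d^2 - d*(b+c)" by linarith
  have "n^2 \<ge> 0" by simp
  then have q2: "n^2*((d-b-c)^2 - 4*(b*c+n)) \<le> n^2*((d^2 - d*(b+c)) - 4*(b*c+n))"
    using q1 by (intro mult_left_mono) auto
  have "b*c \<ge> b" using bc b2 by simp
  then have "b*c + n > 0" using nb by linarith
  then have q3: "n^2*(b*c+n) \<ge> 0" by simp
  have "(d-2)*(b+c-2) \<ge> 2*2" using cd bc b2 by (intro mult_mono) auto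
  then have q4: "d*(b+c) \<ge> 2*(b+c+d)" by (simp add: algebra_simps)
  have q5: "\<bar>n\<bar>*(d*(b+c)) \<ge> \<bar>n\<bar>*(2*(b+c+d))" using q4 by (intro mult_left_mono) auto
  have q6: "n^2*(d*(b+c)) \<ge> \<bar>n\<bar>*(d*(b+c))"
  proof -
    have "\<bar>n\<bar>*1 \<le> \<bar>n\<bar>*\<bar>n\<bar>" using n1 by (intro mult_left_mono) auto
    then have "n^2 \<ge> \<bar>n\<bar>" by (simp add: power2_eq_square)
    moreover have "d*(b+c) \<ge> 0" using cd bc b2 by simp
    ultimately show ?thesis by (intro mult_right_mono) auto
  qed
  have q7: "\<bar>n*(b+c+d)\<bar> = \<bar>n\<bar>*(b+c+d)" using bc cd b2 by (simp add: abs_mult)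
  then have q7': "n*(b+c+d) \<ge> -(\<bar>n\<bar>*(b+c+d))" by (smt (verit) abs_ge_minus_self)
  have q8: "n^2*((d^2 - d*(b+c)) - 4*(b*c+n)) = n^2*d^2 - n^2*(d*(b+c)) - 4*(n^2*(b*c+n))"
    by (simp add: algebra_simps)
  have q9: "2*(n*(b+c+d) + 2*b*c*d) - 1 = 2*(n*(b+c+d)) + 4*(b*c*d) - 1" by (simp add: algebra_simps)
  have q5': "\<bar>n\<bar>*(d*(b+c)) \<ge> 2*(\<bar>n\<bar>*(b+c+d))" using q5 by (simp only: mult.left_commute[of 2 "\<bar>n\<bar>" "b+c+d"])
  have lin: "\<And>H U V W N A X Z::int. H \<ge> 2*N + 4*X - 1 \<Longrightarrow> H \<le> U - V - 4*W \<Longrightarrow> W \<ge> 0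
     \<Longrightarrow> V \<ge> Z \<Longrightarrow> Z \<ge> 2*A \<Longrightarrow> N \<ge> -A \<Longrightarrow> U + 1 \<ge> 4*X" by linarith
  have h': "n^2*((d-b-c)^2 - 4*(b*c+n)) \<ge> 2*(n*(b+c+d)) + 4*(b*c*d) - 1" using h q9 by simp
  have q2': "n^2*((d-b-c)^2 - 4*(b*c+n)) \<le> n^2*d^2 - n^2*(d*(b+c)) - 4*(n^2*(b*c+n))" using q2 q8 by simp
  show ?thesis by (rule lin[OF h' q2' q3 q6 q5' q7'])
qed

lemma lin_fin: "\<And>U X::real. U \<le> 3.847*X \<Longrightarrow> 4*X \<le> U + 1 \<Longrightarrow> 24 \<le> X \<Longrightarrow> False"
proof -
  fix U X :: real assume a: "U \<le> 3.847*X" "4*X \<le> U + 1" "24 \<le> X"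
  from a(1) have "1000*U \<le> 3847*X" by simp
  with a(2,3) show False by linarith
qed

theorem lemma4:
  fixes n a b c d :: int
  assumes "n \<noteq> 0"
    and "has_D n {a, b, c, d}"
    and "\<bar>n\<bar>^3 \<le> a" and "a < b" and "b < c" and "c < d"
  shows "real_of_int d > 3.847 * real_of_int b * real_of_int c / real_of_int n ^ 2"
proof -
  note n0 = assms(1) and na = assms(3) and ab = assms(4) and bc = assms(5) and cd = assms(6)
  note nf = n_facts[OF n0 na]
  have hD: "\<forall>x\<in>{a,b,c,d}. \<forall>y\<in>{a,b,c,d}. x \<noteq> y \<longrightarrow> is_square (x*y + n)"
    using assms(2) unfolding has_D_def by blast
  have "is_square (a*b+n)" using hD ab by simp
  then obtain r where r: "a*b+n = r^2" and r0: "r \<ge> 0" using sq_witness by blast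
  have "is_square (a*c+n)" using hD ab bc by simp
  then obtain s where s: "a*c+n = s^2" and s0: "s \<ge> 0" using sq_witness by blast
  have "is_square (a*d+n)" using hD ab bc cd by simp
  then obtain x where x: "a*d+n = x^2" and x0: "x \<ge> 0" using sq_witness by blast
  have "is_square (b*c+n)" using hD ab bc cd by simp
  then obtain t where t: "b*c+n = t^2" and t0: "t \<ge> 0" using sq_witness by blast
  have "is_square (b*d+n)" using hD ab bc cd by simp
  then obtain y where y: "b*d+n = y^2" and y0: "y \<ge> 0" using sq_witness by blast
  have "is_square (c*d+n)" using hD ab bc cd by simp
  then obtain z where z: "c*d+n = z^2" and z0: "z \<ge> 0" using sq_witness by blast
  have nb: "\<bar>n\<bar> < b" and b2: "b \<ge> 2" and n2b: "n^2 < b" using nf ab by auto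
  define M where "M = n*(b+c+d) + 2*b*c*d"
  define W where "W = t*y*z"
  define e where "e = M - 2*W"
  have W0: "W \<ge> 0" unfolding W_def using t0 y0 z0 by simp
  have W2: "W^2 = (b*c+n)*(b*d+n)*(c*d+n)" unfolding W_def using t y z by (simp add: power_mult_distrib)
  have key: "M^2 - 4*W^2 = n^2*((d-b-c)^2 - 4*(b*c+n))"
    unfolding W2 M_def by (simp add: power2_eq_square algebra_simps)
  have eid: "b*e + n^2 = (b*z - t*y)^2"
  proof -
    have "(b*z - t*y)^2 = b^2*z^2 - 2*b*(t*y*z) + t^2*y^2" by (simp add: power2_eq_square algebra_simps)
    also have "\<dots> = b^2*(c*d+n) - 2*b*W + (b*c+n)*(b*d+n)" using t y z W_def by simp
    also have "\<dots> = b*e + n^2" unfolding e_def M_def by (simp add: power2_eq_square algebra_simps)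
    finally show ?thesis by simp
  qed
  have e0: "e \<ge> 0"
  proof (rule ccontr)
    assume "\<not> e \<ge> 0"
    then have "e \<le> -1" by simp
    then have "b*e \<le> b*(-1)" using b2 by (intro mult_left_mono) auto
    then have "b*e + n^2 < 0" using n2b by simp
    moreover have "(b*z - t*y)^2 \<ge> 0" by simp
    ultimately show False using eid by simp
  qed
  have e1: "e \<noteq> 0"
  proof
    assume "e = 0"
    then have "M = 2*W" unfolding e_def by simp
    then have "M^2 - 4*W^2 = 0" by (simp add: power2_eq_square)
    then have "n^2*((d-b-c)^2 - 4*(b*c+n)) = 0" using key by simp
    then have "(d-b-c)^2 = (2*t)^2" using n0 t by (simp add: power_mult_distrib)
    then have "\<bar>d-b-c\<bar> = \<bar>2*t\<bar>" using abs_le_square_iff by (metis order_antisym order_refl)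
    then have "d-b-c = 2*t \<or> d-b-c = -(2*t)" using t0 by linarith
    then show False
    proof
      assume "d-b-c = 2*t"
      then have "d = b + c + 2*t" by simp
      then show False using regular_case_false[OF n0 na ab bc r r0 s s0 t t0 x x0] by simp
    next
      assume "d-b-c = -(2*t)"
      then have "2*t < b" using cd by simp
      then have "(2*t)^2 < b^2" using t0 by (intro power_strict_mono) auto
      moreover have "(2*t)^2 = 4*(b*c) + 4*n" using t[symmetric] by (simp add: power_mult_distrib)
      moreover have "b*c \<ge> b*b" using bc b2 by (intro mult_left_mono) auto
      moreover have "b*b \<ge> 2*b" using b2 by (intro mult_right_mono) auto
      ultimately show False using nb abs_ge_minus_self[of n] unfolding power2_eq_square by linarith
    qed
  qed
  have "2*W \<le> M - 1" using e0 e1 unfolding e_def by simp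
  then have "(2*W)^2 \<le> (M-1)^2" using W0 by (intro power_mono) auto
  then have "4*W^2 \<le> M^2 - 2*M + 1" by (simp add: power2_eq_square algebra_simps)
  then have ineq: "n^2*((d-b-c)^2 - 4*(b*c+n)) \<ge> 2*(n*(b+c+d) + 2*b*c*d) - 1"
    using key unfolding M_def by linarith
  have dbc: "d \<ge> b + c"
  proof (rule ccontr)
    assume "\<not> d \<ge> b + c"
    then show False using small_d_false[OF n0 nb bc cd _ ineq] by simp
  qed
  have bound: "n^2*d^2 + 1 \<ge> 4*(b*c*d)" by (rule big_d_bound[OF n0 nb b2 bc cd dbc ineq])
  have "b*c \<ge> 2*3" using b2 bc by (intro mult_mono) auto
  then have "b*c*d \<ge> 6*4" using cd bc b2 by (intro mult_mono) auto
  then have "real_of_int (b*c*d) \<ge> real_of_int 24" by (simp only: of_int_le_iff)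
  then have X24: "real_of_int b * real_of_int c * real_of_int d \<ge> 24" by simp
  have bnd: "real_of_int n ^ 2 * real_of_int d ^ 2 + 1 \<ge> 4 * (real_of_int b * real_of_int c * real_of_int d)"
  proof -
    have "real_of_int (4*(b*c*d)) \<le> real_of_int (n^2*d^2 + 1)" using bound by (simp only: of_int_le_iff)
    then show ?thesis by simp
  qed
  show ?thesis
  proof (rule ccontr)
    assume "\<not> ?thesis"
    then have h: "real_of_int d \<le> 3.847 * real_of_int b * real_of_int c / real_of_int n ^ 2" by simp
    have np: "real_of_int n ^ 2 > 0" using n0 by simp
    have "real_of_int d * real_of_int n ^ 2 \<le> 3.847 * real_of_int b * real_of_int c"
      using h np by (simp add: pos_le_divide_eq)
    then have "(real_of_int d * real_of_int n ^ 2) * real_of_int d \<le> (3.847 * real_of_int b * real_of_int c) * real_of_int d"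
      using cd bc b2 by (intro mult_right_mono) auto
    then have h2: "real_of_int n ^ 2 * real_of_int d ^ 2 \<le> 3.847 * (real_of_int b * real_of_int c * real_of_int d)"
      by (simp add: power2_eq_square algebra_simps)
    show False by (rule lin_fin[OF h2 bnd X24])
  qed
qed

end
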